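(* For every positive integer $n$ that is a perfect square, there exist two sets $A_1,A_2$ of $n$ lines each in $\mathbb{R}^2$ such that for every line $\ell$ there are $i\in\{1,2\}$ and a closed halfplane $\ell^\sigma$ bounded by $\ell$ such that every subset $A'\subseteq A_i$ with $V(A')\subseteq\ell^\sigma$ satisfies $|A'|\le\sqrt{n}$.
   Context: For a finite set $A$ of lines in $\mathbb{R}^2$, $V(A)$ denotes the set of all intersection points of pairs of lines of $A$. *)

theory Defs
  imports Complex_Main
begin

definition is_line :: "(real \<times> real) set \<Rightarrow> bool" where
  "is_line L \<longleftrightarrow> (\<exists>a b c. (a, b) \<noteq> (0, 0) \<and> L = {p. a * fst p + b * snd p = c})"

definition V :: "(real \<times> real) set set \<Rightarrow> (real \<times> real) set" where
  "V A = (\<Union>L1\<in>A. \<Union>L2\<in>A. if L1 \<noteq> L2 then L1 \<inter> L2 else {})"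

definition closed_halfplane_of :: "(real \<times> real) set \<Rightarrow> (real \<times> real) set \<Rightarrow> bool" where
  "closed_halfplane_of L H \<longleftrightarrow>
     (\<exists>a b c. (a, b) \<noteq> (0, 0) \<and> L = {p. a * fst p + b * snd p = c}
              \<and> H = {p. a * fst p + b * snd p \<le> c})"

end

theory Submission
  imports Defs
begin

definition lineA :: "nat \<Rightarrow> nat \<Rightarrow> (real \<times> real) set" where
  "lineA k p = {z. fst z + real p * snd z = real (p div k) + 1}"

definition lineB :: "nat \<Rightarrow> (real \<times> real) set" where
  "lineB p = {z. fst z + real p * snd z = 0}"

lemma inj_lineA: "inj (lineA k)"
proof (rule injI)
  fix p q assume eq: "lineA k p = lineA k q"
  have "(real (p div k) + 1, 0) \<in> lineA k p" by (simp add: lineA_def)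
  hence "(real (p div k) + 1, 0) \<in> lineA k q" using eq by simp
  hence e1: "real (p div k) + 1 = real (q div k) + 1" by (simp add: lineA_def)
  have "(real (p div k) + 1 - real p, 1) \<in> lineA k p" by (simp add: lineA_def)
  hence "(real (p div k) + 1 - real p, 1) \<in> lineA k q" using eq by simp
  hence "real (p div k) + 1 - real p + real q = real (q div k) + 1" by (simp add: lineA_def)
  with e1 show "p = q" by simp
qed

lemma inj_lineB: "inj lineB"
proof (rule injI)
  fix p q assume eq: "lineB p = lineB q"
  have "(- real p, 1) \<in> lineB p" by (simp add: lineB_def)
  hence "(- real p, 1) \<in> lineB q" using eq by simp
  hence "- real p + real q = 0" by (simp add: lineB_def)
  thus "p = q" by simp
qed

lemma in_V: "L1 \<in> A \<Longrightarrow> L2 \<in> A \<Longrightarrow> L1 \<noteq> L2 \<Longrightarrow> z \<in> L1 \<Longrightarrow> z \<in> L2 \<Longrightarrow> z \<in> V A"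
  unfolding V_def by (rule UN_I[of L1], assumption, rule UN_I[of L2]) auto

lemma is_line_A: "is_line (lineA k p)"
  unfolding is_line_def lineA_def
  by (rule exI[of _ 1], rule exI[of _ "real p"], rule exI[of _ "real (p div k) + 1"]) simp

lemma is_line_B: "is_line (lineB p)"
  unfolding is_line_def lineB_def
  by (rule exI[of _ 1], rule exI[of _ "real p"], rule exI[of _ 0]) simp

lemma boundB:
  assumes "A' \<subseteq> lineB ` {0..<n}" "V A' \<subseteq> H" "(0,0) \<notin> H"
  shows "card A' \<le> 1"
proof -
  have fin: "finite A'" using assms(1) finite_subset by blast
  have "\<forall>L1\<in>A'. \<forall>L2\<in>A'. L1 = L2"
  proof (intro ballI, rule ccontr)
    fix L1 L2 assume h: "L1 \<in> A'" "L2 \<in> A'" "L1 \<noteq> L2"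
    have "(0,0) \<in> L1" "(0,0) \<in> L2" using h assms(1) by (auto simp: lineB_def)
    hence "(0,0) \<in> V A'" using in_V h by metis
    thus False using assms by blast
  qed
  thus ?thesis using card_le_Suc0_iff_eq[OF fin] by simp
qed

lemma sub_image:
  assumes "A' \<subseteq> f ` S"
  shows "A' = f ` {p\<in>S. f p \<in> A'}"
  using assms by blast

lemma boundA_centers:
  assumes "A' \<subseteq> lineA k ` {0..<k*k}" "V A' \<subseteq> H" "\<forall>j::nat. (real j + 1, 0) \<notin> H"
  shows "card A' \<le> k"
proof -
  define P where "P = {p\<in>{0..<k*k}. lineA k p \<in> A'}"
  have A'eq: "A' = lineA k ` P" unfolding P_def using sub_image[OF assms(1)] .
  have cA: "card A' = card P" unfolding A'eq
    by (rule card_image) (metis inj_lineA inj_on_subset subset_UNIV)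
  have inj: "inj_on (\<lambda>p. p div k) P"
  proof (rule inj_onI, rule ccontr)
    fix p q assume h: "p \<in> P" "q \<in> P" "p div k = q div k" "p \<noteq> q"
    have ne: "lineA k p \<noteq> lineA k q" using h(4) inj_lineA by (metis injD)
    have "(real (p div k) + 1, 0) \<in> lineA k p" "(real (p div k) + 1, 0) \<in> lineA k q"
      using h(3) by (auto simp: lineA_def)
    hence "(real (p div k) + 1, 0) \<in> V A'" using in_V ne h(1,2) unfolding P_def by blast
    thus False using assms(2,3) by blast
  qed
  have img: "(\<lambda>p. p div k) ` P \<subseteq> {0..<k}"
  proof
    fix x assume "x \<in> (\<lambda>p. p div k) ` P"
    then obtain p where "p < k*k" "x = p div k" unfolding P_def by auto
    thus "x \<in> {0..<k}" by (simp add: less_mult_imp_div_less)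
  qed
  have "card P \<le> card {0..<k}" using card_inj_on_le[OF inj img] by simp
  thus ?thesis using cA by simp
qed

lemma div_less_imp: "(p::nat) div k < q div k \<Longrightarrow> p < q"
  by (metis div_le_mono not_le)

lemma cross_point:
  assumes "p div k < q div k"
  shows "\<exists>z. z \<in> lineA k p \<and> z \<in> lineA k q \<and> snd z > 0"
proof -
  have pq: "real p < real q" using div_less_imp[OF assms] by simp
  have ab: "real (p div k) + 1 < real (q div k) + 1" using assms by simp
  define y where "y = (real (q div k) - real (p div k)) / (real q - real p)"
  have ypos: "y > 0" unfolding y_def using pq assms by (simp add: divide_pos_pos)
  have yq: "(real q - real p) * y = real (q div k) - real (p div k)"
    unfolding y_def using pq by simp
  define z where "z = (real (p div k) + 1 - real p * y, y)"
  have "z \<in> lineA k p" unfolding z_def lineA_def by simp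
  moreover have "z \<in> lineA k q" unfolding z_def lineA_def using yq by (simp add: algebra_simps)
  ultimately show ?thesis using ypos unfolding z_def by auto
qed

lemma boundA_axis:
  assumes "A' \<subseteq> lineA k ` {0..<k*k}" "V A' \<subseteq> H" "\<forall>z\<in>H. snd z \<le> 0"
  shows "card A' \<le> k"
proof -
  define P where "P = {p\<in>{0..<k*k}. lineA k p \<in> A'}"
  have A'eq: "A' = lineA k ` P" unfolding P_def using sub_image[OF assms(1)] .
  have cA: "card A' = card P" unfolding A'eq
    by (rule card_image) (metis inj_lineA inj_on_subset subset_UNIV)
  have samediv: "p div k = q div k" if h: "p \<in> P" "q \<in> P" for p q
  proof (rule ccontr)
    assume "p div k \<noteq> q div k"
    then consider "p div k < q div k" | "q div k < p div k" by linarith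
    then obtain z where z: "z \<in> lineA k p" "z \<in> lineA k q" "snd z > 0"
      using cross_point by metis
    have "lineA k p \<noteq> lineA k q" using \<open>p div k \<noteq> q div k\<close> inj_lineA by (metis injD)
    hence "z \<in> V A'" using in_V z h unfolding P_def by blast
    thus False using assms(2,3) z(3) by fastforce
  qed
  have inj: "inj_on (\<lambda>p. p mod k) P"
  proof (rule inj_onI)
    fix p q assume h: "p \<in> P" "q \<in> P" "p mod k = q mod k"
    thus "p = q" using samediv[OF h(1,2)] by (metis div_mult_mod_eq)
  qed
  have img: "(\<lambda>p. p mod k) ` P \<subseteq> {0..<k}"
  proof
    fix x assume "x \<in> (\<lambda>p. p mod k) ` P"
    then obtain p where "p < k*k" "x = p mod k" unfolding P_def by auto
    thus "x \<in> {0..<k}" by (cases "k = 0") auto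
  qed
  have "card P \<le> card {0..<k}" using card_inj_on_le[OF inj img] by simp
  thus ?thesis using cA by simp
qed


lemma hp_pos: "(a,b) \<noteq> (0,0) \<Longrightarrow> closed_halfplane_of {p. a*fst p + b*snd p = c} {p. a*fst p + b*snd p \<le> c}"
  unfolding closed_halfplane_of_def by blast

lemma hp_neg: "(a,b) \<noteq> (0,0) \<Longrightarrow> closed_halfplane_of {p. a*fst p + b*snd p = c} {p. (-a)*fst p + (-b)*snd p \<le> -c}"
  unfolding closed_halfplane_of_def
  by (rule exI[of _ "-a"], rule exI[of _ "-b"], rule exI[of _ "-c"]) auto

theorem mainTheorem4:
  fixes n :: nat
  assumes "n > 0" and "\<exists>k::nat. n = k ^ 2"
  shows "\<exists>A :: nat \<Rightarrow> (real \<times> real) set set.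
           (\<forall>i\<in>{1, 2}. finite (A i) \<and> card (A i) = n \<and> (\<forall>L\<in>A i. is_line L)) \<and>
           (\<forall>l. is_line l \<longrightarrow>
              (\<exists>i\<in>{1, 2}. \<exists>H. closed_halfplane_of l H \<and>
                 (\<forall>A' \<subseteq> A i. V A' \<subseteq> H \<longrightarrow> real (card A') \<le> sqrt (real n))))"
proof -
  obtain k where nk: "n = k^2" using assms(2) by blast
  have kpos: "k > 0" using assms(1) nk by (cases k) auto
  have nkk: "n = k*k" using nk by (simp add: power2_eq_square)
  have sq: "sqrt (real n) = real k" using nk by simp
  define A where "A = (\<lambda>i::nat. if i = 1 then lineA k ` {0..<n} else lineB ` {0..<n})"
  have A1: "A 1 = lineA k ` {0..<k*k}" using nkk by (simp add: A_def)
  have A2: "A 2 = lineB ` {0..<n}" by (simp add: A_def)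
  show ?thesis
  proof (intro exI[of _ A] conjI)
    show "\<forall>i\<in>{1, 2}. finite (A i) \<and> card (A i) = n \<and> (\<forall>L\<in>A i. is_line L)"
    proof
      fix i :: nat assume "i \<in> {1,2}"
      then consider "i = 1" | "i = 2" by blast
      thus "finite (A i) \<and> card (A i) = n \<and> (\<forall>L\<in>A i. is_line L)"
      proof cases
        case 1
        have "card (lineA k ` {0..<n}) = n"
          by (subst card_image) (auto intro: inj_on_subset[OF inj_lineA])
        thus ?thesis using 1 by (auto simp: A_def is_line_A)
      next
        case 2
        have "card (lineB ` {0..<n}) = n"
          by (subst card_image) (auto intro: inj_on_subset[OF inj_lineB])
        thus ?thesis using 2 by (auto simp: A_def is_line_B)
      qed
    qed
    show "\<forall>l. is_line l \<longrightarrow>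
              (\<exists>i\<in>{1, 2}. \<exists>H. closed_halfplane_of l H \<and>
                 (\<forall>A' \<subseteq> A i. V A' \<subseteq> H \<longrightarrow> real (card A') \<le> sqrt (real n)))"
    proof (intro allI impI)
      fix l assume "is_line l"
      then obtain a b c where ab: "(a,b) \<noteq> ((0::real),(0::real))" and l: "l = {p. a*fst p + b*snd p = c}"
        unfolding is_line_def by blast
      have k1: "real 1 \<le> real k" using kpos by simp
      consider "c < 0" | "c > 0" | "c = 0" "a > 0" | "c = 0" "a < 0" | "c = 0" "a = 0" by linarith
      thus "\<exists>i\<in>{1, 2}. \<exists>H. closed_halfplane_of l H \<and>
                 (\<forall>A' \<subseteq> A i. V A' \<subseteq> H \<longrightarrow> real (card A') \<le> sqrt (real n))"
      proof cases
        case 1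
        show ?thesis
        proof (rule bexI[of _ 2], rule exI[of _ "{p. a*fst p + b*snd p \<le> c}"], intro conjI allI impI)
          show "closed_halfplane_of l {p. a*fst p + b*snd p \<le> c}" using hp_pos[OF ab] l by simp
          fix A' assume "A' \<subseteq> A 2" "V A' \<subseteq> {p. a*fst p + b*snd p \<le> c}"
          hence "card A' \<le> 1" using boundB[of A' n] A2 1 by auto
          thus "real (card A') \<le> sqrt (real n)" using sq k1 by linarith
        qed simp
      next
        case 2
        show ?thesis
        proof (rule bexI[of _ 2], rule exI[of _ "{p. (-a)*fst p + (-b)*snd p \<le> -c}"], intro conjI allI impI)
          show "closed_halfplane_of l {p. (-a)*fst p + (-b)*snd p \<le> -c}" using hp_neg[OF ab] l by simp
          fix A' assume "A' \<subseteq> A 2" "V A' \<subseteq> {p. (-a)*fst p + (-b)*snd p \<le> -c}"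
          hence "card A' \<le> 1" using boundB[of A' n] A2 2 by auto
          thus "real (card A') \<le> sqrt (real n)" using sq k1 by linarith
        qed simp
      next
        case 3
        show ?thesis
        proof (rule bexI[of _ 1], rule exI[of _ "{p. a*fst p + b*snd p \<le> c}"], intro conjI allI impI)
          show "closed_halfplane_of l {p. a*fst p + b*snd p \<le> c}" using hp_pos[OF ab] l by simp
          fix A' assume h: "A' \<subseteq> A 1" "V A' \<subseteq> {p. a*fst p + b*snd p \<le> c}"
          have "\<forall>j::nat. (real j + 1, 0) \<notin> {p. a*fst p + b*snd p \<le> c}"
          proof
            fix j :: nat
            have "0 < a * (real j + 1)" using 3 by (intro mult_pos_pos) auto
            thus "(real j + 1, 0) \<notin> {p. a*fst p + b*snd p \<le> c}" using 3 by (simp add: not_le)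
          qed
          hence "card A' \<le> k" using boundA_centers[of A' k] h A1 by auto
          thus "real (card A') \<le> sqrt (real n)" using sq by simp
        qed simp
      next
        case 4
        show ?thesis
        proof (rule bexI[of _ 1], rule exI[of _ "{p. (-a)*fst p + (-b)*snd p \<le> -c}"], intro conjI allI impI)
          show "closed_halfplane_of l {p. (-a)*fst p + (-b)*snd p \<le> -c}" using hp_neg[OF ab] l by simp
          fix A' assume h: "A' \<subseteq> A 1" "V A' \<subseteq> {p. (-a)*fst p + (-b)*snd p \<le> -c}"
          have "\<forall>j::nat. (real j + 1, 0) \<notin> {p. (-a)*fst p + (-b)*snd p \<le> -c}"
          proof
            fix j :: nat
            have "0 < (-a) * (real j + 1)" using 4 by (intro mult_pos_pos) auto
            thus "(real j + 1, 0) \<notin> {p. (-a)*fst p + (-b)*snd p \<le> -c}" using 4 by simp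
          qed
          hence "card A' \<le> k" using boundA_centers[of A' k] h A1 by auto
          thus "real (card A') \<le> sqrt (real n)" using sq by simp
        qed simp
      next
        case 5
        have b0: "b \<noteq> 0" using ab 5 by simp
        have l': "l = {p. 0*fst p + 1*snd p = 0}" using l 5 b0 by auto
        show ?thesis
        proof (rule bexI[of _ 1], rule exI[of _ "{p. 0*fst p + 1*snd p \<le> (0::real)}"], intro conjI allI impI)
          show "closed_halfplane_of l {p. 0*fst p + 1*snd p \<le> (0::real)}" using hp_pos[of 0 1] l' by simp
          fix A' assume h: "A' \<subseteq> A 1" "V A' \<subseteq> {p. 0*fst p + 1*snd p \<le> (0::real)}"
          have "card A' \<le> k" using boundA_axis[of A' k] h A1 by auto
          thus "real (card A') \<le> sqrt (real n)" using sq by simp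
        qed simp
      qed
    qed
  qed
qed

end
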